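(* Let $(\mathbb{L},\Box,\Diamond)$ be an $\mathcal{L}$-algebra as in the context, let $f$ be a proper $\mathbf{A}$-filter of $\mathbb{L}$ and $i$ a proper $\mathbf{A}$-ideal of $\mathbb{L}$. Then (1) $\bigvee_{b\in\mathbb{L}}(f^{-\Diamond}(b)\otimes i(b))=\bigvee_{a\in\mathbb{L}}(f(a)\otimes i(\Diamond a))$; (2) $\bigvee_{b\in\mathbb{L}}(f(b)\otimes i^{-\Box}(b))=\bigvee_{a\in\mathbb{L}}(f(\Box a)\otimes i(a))$.
   Context: $\mathbf{A}=(D,1,0,\vee,\wedge,\otimes,\to)$ is a fixed complete lattice with top $1$ and bottom $0$, frame-distributive and dually frame-distributive, with a commutative associative $\otimes$ residuated by $\to$ ($\alpha\otimes\beta\le\gamma$ iff $\alpha\le\beta\to\gamma$), and $1\to\alpha=\alpha$ for all $\alpha$. An $\mathcal{L}$-algebra $(\mathbb{L},\Box,\Diamond)$ is a bounded lattice $\mathbb{L}$ with unary operations $\Box$ preserving finite meets (including $\Box\top=\top$) and $\Diamond$ preserving finite joins (including $\Diamond\bot=\bot$). An $\mathbf{A}$-filter of $\mathbb{L}$ is $f:\mathbb{L}\to\mathbf{A}$ with $f(\top)=1$ and $f(a\wedge b)=f(a)\wedge f(b)$; it is proper if moreover $f(\bot)=0$. An $\mathbf{A}$-ideal is $i:\mathbb{L}\to\mathbf{A}$ with $i(\bot)=1$ and $i(a\vee b)=i(a)\wedge i(b)$; proper if moreover $i(\top)=0$. For $k:\mathbb{L}\to\mathbf{A}$, $k^{-\Diamond}(a)=\bigvee\{k(b)\mid\Diamond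 b\le a\}$ and $k^{-\Box}(a)=\bigvee\{k(b)\mid a\le\Box b\}$. *)

theory Defs
  imports Main
begin

definition residuated_frame_algebra ::
  "('a::complete_lattice \<Rightarrow> 'a \<Rightarrow> 'a) \<Rightarrow> ('a \<Rightarrow> 'a \<Rightarrow> 'a) \<Rightarrow> bool" where
  "residuated_frame_algebra tensor res \<longleftrightarrow>
     (\<forall>(a::'a) S. inf a (Sup S) = (SUP s\<in>S. inf a s)) \<and>
     (\<forall>(a::'a) S. sup a (Inf S) = (INF s\<in>S. sup a s)) \<and>
     (\<forall>x y. tensor x y = tensor y x) \<and>
     (\<forall>x y z. tensor (tensor x y) z = tensor x (tensor y z)) \<and>
     (\<forall>x y z. tensor x y \<le> z \<longleftrightarrow> x \<le> res y z) \<and>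
     (\<forall>a. res top a = a)"

definition L_algebra :: "('b::bounded_lattice \<Rightarrow> 'b) \<Rightarrow> ('b \<Rightarrow> 'b) \<Rightarrow> bool" where
  "L_algebra box dia \<longleftrightarrow>
     box top = top \<and> (\<forall>a b. box (inf a b) = inf (box a) (box b)) \<and>
     dia bot = bot \<and> (\<forall>a b. dia (sup a b) = sup (dia a) (dia b))"

definition A_filter :: "('b::bounded_lattice \<Rightarrow> 'a::complete_lattice) \<Rightarrow> bool" where
  "A_filter f \<longleftrightarrow> f top = top \<and> (\<forall>a b. f (inf a b) = inf (f a) (f b))"

definition proper_A_filter :: "('b::bounded_lattice \<Rightarrow> 'a::complete_lattice) \<Rightarrow> bool" where
  "proper_A_filter f \<longleftrightarrow> A_filter f \<and> f bot = bot"

definition A_ideal :: "('b::bounded_lattice \<Rightarrow> 'a::complete_lattice) \<Rightarrow> bool" where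
  "A_ideal i \<longleftrightarrow> i bot = top \<and> (\<forall>a b. i (sup a b) = inf (i a) (i b))"

definition proper_A_ideal :: "('b::bounded_lattice \<Rightarrow> 'a::complete_lattice) \<Rightarrow> bool" where
  "proper_A_ideal i \<longleftrightarrow> A_ideal i \<and> i top = bot"

definition inv_dia :: "('b::bounded_lattice \<Rightarrow> 'b) \<Rightarrow> ('b \<Rightarrow> 'a::complete_lattice) \<Rightarrow> 'b \<Rightarrow> 'a" where
  "inv_dia dia k a = Sup {k b | b. dia b \<le> a}"

definition inv_box :: "('b::bounded_lattice \<Rightarrow> 'b) \<Rightarrow> ('b \<Rightarrow> 'a::complete_lattice) \<Rightarrow> 'b \<Rightarrow> 'a" where
  "inv_box box k a = Sup {k b | b. a \<le> box b}"

end

theory Submission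
  imports Defs
begin

lemma tmono:
  fixes tensor res :: "'a::complete_lattice \<Rightarrow> 'a \<Rightarrow> 'a"
  assumes r: "\<forall>x y z. tensor x y \<le> z \<longleftrightarrow> x \<le> res y z"
    and c: "\<forall>x y. tensor x y = tensor y x"
    and "x \<le> x'" "y \<le> y'"
  shows "tensor x y \<le> tensor x' y'"
proof -
  have m: "tensor u v \<le> tensor u' v" if "u \<le> u'" for u u' v
  proof -
    have "u' \<le> res v (tensor u' v)" using r by (metis order_refl)
    then have "u \<le> res v (tensor u' v)" using that by (rule order_trans[rotated])
    then show ?thesis using r by (metis order_refl)
  qed
  have "tensor x y \<le> tensor x' y" using m assms by blast
  also have "\<dots> = tensor y x'" using c by metis
  also have "\<dots> \<le> tensor y' x'" using m assms by blast
  also have "\<dots> = tensor x' y'" using c by metis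
  finally show ?thesis .
qed

lemma tsup:
  fixes tensor res :: "'a::complete_lattice \<Rightarrow> 'a \<Rightarrow> 'a"
  assumes r: "\<forall>x y z. tensor x y \<le> z \<longleftrightarrow> x \<le> res y z"
    and c: "\<forall>x y. tensor x y = tensor y x"
  shows "tensor (Sup S) y = (SUP s\<in>S. tensor s y)"
proof (rule antisym)
  have "Sup S \<le> res y (SUP s\<in>S. tensor s y)"
  proof (rule Sup_least)
    fix s assume "s \<in> S"
    then have "tensor s y \<le> (SUP s\<in>S. tensor s y)" by (rule SUP_upper)
    then show "s \<le> res y (SUP s\<in>S. tensor s y)" using r by simp
  qed
  then show "tensor (Sup S) y \<le> (SUP s\<in>S. tensor s y)" using r by simp
  show "(SUP s\<in>S. tensor s y) \<le> tensor (Sup S) y"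
    by (rule SUP_least, rule tmono[OF r c], auto intro: Sup_upper)
qed

theorem mainTheorem5:
  fixes tensor res :: "'a::complete_lattice \<Rightarrow> 'a \<Rightarrow> 'a"
    and box dia :: "'b::bounded_lattice \<Rightarrow> 'b"
    and f i :: "'b \<Rightarrow> 'a"
  assumes "residuated_frame_algebra tensor res"
    and "L_algebra box dia"
    and "proper_A_filter f"
    and "proper_A_ideal i"
  shows "(SUP b. tensor (inv_dia dia f b) (i b)) = (SUP a. tensor (f a) (i (dia a)))
    \<and> (SUP b. tensor (f b) (inv_box box i b)) = (SUP a. tensor (f (box a)) (i a))"
proof -
  have r: "\<forall>x y z. tensor x y \<le> z \<longleftrightarrow> x \<le> res y z"
   and c: "\<forall>x y. tensor x y = tensor y x"
    using assms(1) unfolding residuated_frame_algebra_def by auto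
  have fm: "f x \<le> f y" if "x \<le> y" for x y
  proof -
    have "f x = f (inf x y)" using that by (simp add: inf_absorb1)
    also have "\<dots> = inf (f x) (f y)" using assms(3) unfolding proper_A_filter_def A_filter_def by blast
    also have "\<dots> \<le> f y" by (rule inf_le2)
    finally show ?thesis .
  qed
  have im: "i y \<le> i x" if "x \<le> y" for x y
  proof -
    have "i y = i (sup x y)" using that by (simp add: sup_absorb2)
    also have "\<dots> = inf (i x) (i y)" using assms(4) unfolding proper_A_ideal_def A_ideal_def by blast
    also have "\<dots> \<le> i x" by (rule inf_le1)
    finally show ?thesis .
  qed
  have ts: "tensor (Sup S) y = (SUP s\<in>S. tensor s y)" for S y using tsup[OF r c] .
  have ts2: "tensor y (Sup S) = (SUP s\<in>S. tensor y s)" for S y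
  proof -
    have "tensor y (Sup S) = tensor (Sup S) y" using c[rule_format, of y "Sup S"] .
    also have "\<dots> = (SUP s\<in>S. tensor s y)" by (rule ts)
    also have "\<dots> = (SUP s\<in>S. tensor y s)" using c by (intro SUP_cong) auto
    finally show ?thesis .
  qed
  have 1: "(SUP b. tensor (inv_dia dia f b) (i b)) = (SUP a. tensor (f a) (i (dia a)))"
  proof (rule antisym)
    show "(SUP b. tensor (inv_dia dia f b) (i b)) \<le> (SUP a. tensor (f a) (i (dia a)))"
    proof (rule SUP_least)
      fix b
      have "tensor (inv_dia dia f b) (i b) = (SUP s\<in>{f c |c. dia c \<le> b}. tensor s (i b))"
        unfolding inv_dia_def by (rule ts)
      also have "\<dots> \<le> (SUP a. tensor (f a) (i (dia a)))"
      proof (rule SUP_least)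
        fix s assume "s \<in> {f c |c. dia c \<le> b}"
        then obtain c where s: "s = f c" and d: "dia c \<le> b" by blast
        have "tensor s (i b) \<le> tensor (f c) (i (dia c))"
          unfolding s by (rule tmono[OF r c order_refl im[OF d]])
        also have "\<dots> \<le> (SUP a. tensor (f a) (i (dia a)))" by (rule SUP_upper) simp
        finally show "tensor s (i b) \<le> (SUP a. tensor (f a) (i (dia a)))" .
      qed
      finally show "tensor (inv_dia dia f b) (i b) \<le> (SUP a. tensor (f a) (i (dia a)))" .
    qed
    show "(SUP a. tensor (f a) (i (dia a))) \<le> (SUP b. tensor (inv_dia dia f b) (i b))"
    proof (rule SUP_least)
      fix a
      have "f a \<le> inv_dia dia f (dia a)" unfolding inv_dia_def by (rule Sup_upper) blast
      then have "tensor (f a) (i (dia a)) \<le> tensor (inv_dia dia f (dia a)) (i (dia a))"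
        by (rule tmono[OF r c _ order_refl])
      also have "\<dots> \<le> (SUP b. tensor (inv_dia dia f b) (i b))" by (rule SUP_upper) simp
      finally show "tensor (f a) (i (dia a)) \<le> (SUP b. tensor (inv_dia dia f b) (i b))" .
    qed
  qed
  have 2: "(SUP b. tensor (f b) (inv_box box i b)) = (SUP a. tensor (f (box a)) (i a))"
  proof (rule antisym)
    show "(SUP b. tensor (f b) (inv_box box i b)) \<le> (SUP a. tensor (f (box a)) (i a))"
    proof (rule SUP_least)
      fix b
      have "tensor (f b) (inv_box box i b) = (SUP s\<in>{i c |c. b \<le> box c}. tensor (f b) s)"
        unfolding inv_box_def by (rule ts2)
      also have "\<dots> \<le> (SUP a. tensor (f (box a)) (i a))"
      proof (rule SUP_least)
        fix s assume "s \<in> {i c |c. b \<le> box c}"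
        then obtain c where s: "s = i c" and d: "b \<le> box c" by blast
        have "tensor (f b) s \<le> tensor (f (box c)) (i c)"
          unfolding s by (rule tmono[OF r c fm[OF d] order_refl])
        also have "\<dots> \<le> (SUP a. tensor (f (box a)) (i a))" by (rule SUP_upper) simp
        finally show "tensor (f b) s \<le> (SUP a. tensor (f (box a)) (i a))" .
      qed
      finally show "tensor (f b) (inv_box box i b) \<le> (SUP a. tensor (f (box a)) (i a))" .
    qed
    show "(SUP a. tensor (f (box a)) (i a)) \<le> (SUP b. tensor (f b) (inv_box box i b))"
    proof (rule SUP_least)
      fix a
      have "i a \<le> inv_box box i (box a)" unfolding inv_box_def by (rule Sup_upper) blast
      then have "tensor (f (box a)) (i a) \<le> tensor (f (box a)) (inv_box box i (box a))"
        by (rule tmono[OF r c order_refl])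
      also have "\<dots> \<le> (SUP b. tensor (f b) (inv_box box i b))" by (rule SUP_upper) simp
      finally show "tensor (f (box a)) (i a) \<le> (SUP b. tensor (f b) (inv_box box i b))" .
    qed
  qed
  show ?thesis using 1 2 by blast
qed

end
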